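(* Let $\Bbbk$ be a field of characteristic zero. The algebra $A=\Bbbk[x_1,\ldots,x_6]/(x_1^3,x_2^3,x_3^3,x_4^3,x_5^3,x_6^3,x_1 x_2 x_3)$ fails the WLP in degree $5$.
   Context: For a monomial quotient $A$, $A$ fails the WLP in degree $i$ if $\times(x_1+\cdots+x_6): A_i\to A_{i+1}$ is neither injective nor surjective. *)

theory Defs
  imports "HOL-Library.Poly_Mapping"
begin

text \<open>Polynomials over a coefficient ring 'a in variables x_0, x_1, ... :
  finitely supported maps from monomials (exponent vectors, nat =>0 nat) to coefficients.
  The polynomial ring k[x_1..x_n] is the subset of polynomials only involving x_0..x_(n-1).\<close>

type_synonym 'a mpoly = "(nat \<Rightarrow>\<^sub>0 nat) \<Rightarrow>\<^sub>0 'a"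

definition Var :: "nat \<Rightarrow> ('a::comm_ring_1) mpoly" where
  "Var i = Poly_Mapping.single (Poly_Mapping.single i 1) 1"

definition in_vars :: "nat \<Rightarrow> ('a::comm_ring_1) mpoly \<Rightarrow> bool" where
  "in_vars n p \<longleftrightarrow> (\<forall>m\<in>Poly_Mapping.keys p. Poly_Mapping.keys m \<subseteq> {..<n})"

definition mdeg :: "(nat \<Rightarrow>\<^sub>0 nat) \<Rightarrow> nat" where
  "mdeg m = (\<Sum>i\<in>Poly_Mapping.keys m. Poly_Mapping.lookup m i)"

definition homog :: "nat \<Rightarrow> ('a::comm_ring_1) mpoly \<Rightarrow> bool" where
  "homog d p \<longleftrightarrow> (\<forall>m\<in>Poly_Mapping.keys p. mdeg m = d)"

definition in_ideal :: "nat \<Rightarrow> ('a::comm_ring_1) mpoly list \<Rightarrow> 'a mpoly \<Rightarrow> bool" where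
  "in_ideal n gs p \<longleftrightarrow>
     (\<exists>c. (\<forall>k<length gs. in_vars n (c k)) \<and> p = (\<Sum>k<length gs. c k * gs ! k))"

definition lin_form :: "nat \<Rightarrow> ('a::comm_ring_1) mpoly" where
  "lin_form n = (\<Sum>i<n. Var i)"

text \<open>A = k[x_1..x_n]/(gs), with gs homogeneous. A_i is the space of homogeneous degree-i
  polynomials modulo the ideal. The map x(x_1+...+x_n): A_i -> A_(i+1).\<close>
definition mult_injective :: "nat \<Rightarrow> ('a::comm_ring_1) mpoly list \<Rightarrow> nat \<Rightarrow> bool" where
  "mult_injective n gs i \<longleftrightarrow>
     (\<forall>f. in_vars n f \<and> homog i f \<and> in_ideal n gs (lin_form n * f) \<longrightarrow> in_ideal n gs f)"

definition mult_surjective :: "nat \<Rightarrow> ('a::comm_ring_1) mpoly list \<Rightarrow> nat \<Rightarrow> bool" where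
  "mult_surjective n gs i \<longleftrightarrow>
     (\<forall>g. in_vars n g \<and> homog (Suc i) g \<longrightarrow>
        (\<exists>f. in_vars n f \<and> homog i f \<and> in_ideal n gs (g - lin_form n * f)))"

definition fails_WLP_in_degree :: "nat \<Rightarrow> ('a::comm_ring_1) mpoly list \<Rightarrow> nat \<Rightarrow> bool" where
  "fails_WLP_in_degree n gs i \<longleftrightarrow> \<not> mult_injective n gs i \<and> \<not> mult_surjective n gs i"

end

theory Submission
  imports Defs
begin

definition Phi :: "((nat \<Rightarrow>\<^sub>0 nat) \<Rightarrow> 'a::comm_ring_1) \<Rightarrow> 'a mpoly \<Rightarrow> 'a" where
  "Phi \<psi> p = (\<Sum>m\<in>Poly_Mapping.keys p. Poly_Mapping.lookup p m * \<psi> m)"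

lemma Phi_add: "Phi \<psi> (p + q) = Phi \<psi> p + Phi \<psi> q"
  unfolding Phi_def
  by (rule setsum_keys_plus_distrib[where f="\<lambda>k v. v * \<psi> k"]) (simp_all add: distrib_right)

lemma Phi_zero[simp]: "Phi \<psi> 0 = 0"
  by (simp add: Phi_def)

lemma Phi_uminus: "Phi \<psi> (- p) = - Phi \<psi> p"
  by (simp add: Phi_def sum_negf)

lemma Phi_diff: "Phi \<psi> (p - q) = Phi \<psi> p - Phi \<psi> q"
  using Phi_add[of \<psi> p "-q"] by (simp add: Phi_uminus)

lemma Phi_single: "Phi \<psi> (Poly_Mapping.single m c) = c * \<psi> m"
  by (simp add: Phi_def)

lemma Phi_sum: "Phi \<psi> (\<Sum>x\<in>A. f x) = (\<Sum>x\<in>A. Phi \<psi> (f x))"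
  by (induction A rule: infinite_finite_induct) (simp_all add: Phi_add)

lemma pm_expand: "(p::'a::comm_ring_1 mpoly) =
   (\<Sum>m\<in>Poly_Mapping.keys p. Poly_Mapping.single m (Poly_Mapping.lookup p m))"
proof (rule poly_mapping_eqI)
  fix k
  show "Poly_Mapping.lookup p k = Poly_Mapping.lookup (\<Sum>m\<in>Poly_Mapping.keys p. Poly_Mapping.single m (Poly_Mapping.lookup p m)) k"
    by (simp add: lookup_sum lookup_single when_def in_keys_iff)
qed

lemma Phi_mult_single:
  "Phi \<psi> (c * Poly_Mapping.single s 1) =
     (\<Sum>t\<in>Poly_Mapping.keys c. Poly_Mapping.lookup c t * \<psi> (t + s))"
proof -
  have "c * Poly_Mapping.single s 1 =
     (\<Sum>t\<in>Poly_Mapping.keys c. Poly_Mapping.single t (Poly_Mapping.lookup c t) * Poly_Mapping.single s 1)"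
    by (subst pm_expand[of c]) (simp add: sum_distrib_right)
  also have "\<dots> = (\<Sum>t\<in>Poly_Mapping.keys c. Poly_Mapping.single (t + s) (Poly_Mapping.lookup c t))"
    by (simp add: mult_single)
  finally show ?thesis by (simp add: Phi_sum Phi_single)
qed

lemma Phi_ideal:
  assumes gen: "\<forall>k<length gs. \<exists>s. gs ! k = Poly_Mapping.single s 1 \<and> (\<forall>t. \<psi> (t + s) = 0)"
    and id: "in_ideal n gs p"
  shows "Phi \<psi> p = 0"
proof -
  obtain c where p: "p = (\<Sum>k<length gs. c k * gs ! k)"
    using id unfolding in_ideal_def by blast
  have "Phi \<psi> (c k * gs ! k) = 0" if kl: "k < length gs" for k
  proof -
    obtain s where s: "gs ! k = Poly_Mapping.single s 1" "\<forall>t. \<psi> (t + s) = 0"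
      using gen kl by blast
    show ?thesis using s by (simp add: Phi_mult_single)
  qed
  then show ?thesis by (simp add: p Phi_sum)
qed

lemma Phi_lin:
  assumes "\<forall>t. (\<Sum>i<n. \<psi> (t + Poly_Mapping.single i 1)) = 0"
  shows "Phi \<psi> (lin_form n * f) = 0"
proof -
  have "lin_form n * f = (\<Sum>i<n. f * Poly_Mapping.single (Poly_Mapping.single i 1) 1)"
    by (simp add: lin_form_def Var_def sum_distrib_right sum_distrib_left mult.commute)
  then have "Phi \<psi> (lin_form n * f) =
     (\<Sum>i<n. \<Sum>t\<in>Poly_Mapping.keys f. Poly_Mapping.lookup f t * \<psi> (t + Poly_Mapping.single i 1))"
    by (simp add: Phi_sum Phi_mult_single)
  also have "\<dots> = (\<Sum>t\<in>Poly_Mapping.keys f. Poly_Mapping.lookup f t *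
        (\<Sum>i<n. \<psi> (t + Poly_Mapping.single i 1)))"
    by (subst sum.swap) (simp add: sum_distrib_left)
  also have "\<dots> = 0" using assms by simp
  finally show ?thesis .
qed

definition alpha :: "nat \<Rightarrow> nat \<Rightarrow> nat \<Rightarrow> 'a::comm_ring_1" where
  "alpha a b c =
    (if a = 2 \<and> b = 1 \<and> c = 0 then 1
     else if a = 2 \<and> b = 0 \<and> c = 1 then -1
     else if a = 1 \<and> b = 2 \<and> c = 0 then -1
     else if a = 0 \<and> b = 2 \<and> c = 1 then 1
     else if a = 1 \<and> b = 0 \<and> c = 2 then 1
     else if a = 0 \<and> b = 1 \<and> c = 2 then -1
     else 0)"

lemma alpha_key: "alpha (Suc a) b c + alpha a (Suc b) c + alpha a b (Suc c) = (0::'a::comm_ring_1)"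
  by (auto simp: alpha_def)

lemma alpha_big: "3 \<le> a \<or> 3 \<le> b \<or> 3 \<le> c \<Longrightarrow> alpha a b c = 0"
  by (auto simp: alpha_def)

lemma alpha_pos: "1 \<le> a \<Longrightarrow> 1 \<le> b \<Longrightarrow> 1 \<le> c \<Longrightarrow> alpha a b c = 0"
  by (auto simp: alpha_def)

definition psi :: "(nat \<Rightarrow>\<^sub>0 nat) \<Rightarrow> 'a::comm_ring_1" where
  "psi m = alpha (Poly_Mapping.lookup m 0) (Poly_Mapping.lookup m 1) (Poly_Mapping.lookup m 2) *
           alpha (Poly_Mapping.lookup m 3) (Poly_Mapping.lookup m 4) (Poly_Mapping.lookup m 5)"

lemma six: "{..<6::nat} = {0,1,2,3,4,5}" by auto

lemma psi_lin: "(\<Sum>i<6. psi (t + Poly_Mapping.single i 1)) = (0::'a::comm_ring_1)"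
proof -
  define a where "a = Poly_Mapping.lookup t 0"
  define b where "b = Poly_Mapping.lookup t 1"
  define c where "c = Poly_Mapping.lookup t 2"
  define d where "d = Poly_Mapping.lookup t 3"
  define e where "e = Poly_Mapping.lookup t 4"
  define f where "f = Poly_Mapping.lookup t 5"
  have "(\<Sum>i<6. psi (t + Poly_Mapping.single i 1)) =
     ((alpha (Suc a) b c + alpha a (Suc b) c + alpha a b (Suc c)) * alpha d e f +
     alpha a b c * (alpha (Suc d) e f + alpha d (Suc e) f + alpha d e (Suc f)) :: 'a)"
    by (simp add: six psi_def lookup_add lookup_single a_def b_def c_def d_def e_def f_def algebra_simps)
  then show ?thesis by (simp add: alpha_key)
qed

lemma mdeg_add: "mdeg (a + b) = mdeg a + mdeg b"
  unfolding mdeg_def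
  by (rule setsum_keys_plus_distrib[where f="\<lambda>k v. v"]) simp_all

lemma homog_add: "homog d p \<Longrightarrow> homog d q \<Longrightarrow> homog d (p + q)"
  unfolding homog_def
  by (metis (no_types, lifting) Un_iff keys_add subsetD)

lemma homog_uminus: "homog d p \<Longrightarrow> homog d (- p)"
  unfolding homog_def by simp

lemma homog_diff: "homog d p \<Longrightarrow> homog d q \<Longrightarrow> homog d (p - q)"
  unfolding homog_def
  by (metis (no_types, lifting) Un_iff keys_diff subsetD)

lemma homog_mult:
  assumes "homog d p" "homog e q" shows "homog (d + e) (p * q)"
  unfolding homog_def
proof
  fix m assume "m \<in> Poly_Mapping.keys (p * q)"
  then obtain a b where "m = a + b" "a \<in> Poly_Mapping.keys p" "b \<in> Poly_Mapping.keys q"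
    using keys_mult[of p q] by blast
  then show "mdeg m = d + e" using assms unfolding homog_def by (simp add: mdeg_add)
qed

lemma homog_Var: "homog 1 (Var i :: 'a::comm_ring_1 mpoly)"
  by (simp add: homog_def Var_def mdeg_def)

lemma in_vars_add: "in_vars n p \<Longrightarrow> in_vars n q \<Longrightarrow> in_vars n (p + q)"
  unfolding in_vars_def
  by (metis (no_types, lifting) Un_iff keys_add subsetD)

lemma in_vars_uminus: "in_vars n p \<Longrightarrow> in_vars n (- p)"
  unfolding in_vars_def by simp

lemma in_vars_diff: "in_vars n p \<Longrightarrow> in_vars n q \<Longrightarrow> in_vars n (p - q)"
  unfolding in_vars_def
  by (metis (no_types, lifting) Un_iff keys_diff subsetD)

lemma in_vars_mult:
  assumes "in_vars n p" "in_vars n q" shows "in_vars n (p * q)"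
  unfolding in_vars_def
proof
  fix m assume "m \<in> Poly_Mapping.keys (p * q)"
  then obtain a b where "m = a + b" "a \<in> Poly_Mapping.keys p" "b \<in> Poly_Mapping.keys q"
    using keys_mult[of p q] by blast
  then have "Poly_Mapping.keys a \<subseteq> {..<n}" "Poly_Mapping.keys b \<subseteq> {..<n}"
    using assms unfolding in_vars_def by auto
  then show "Poly_Mapping.keys m \<subseteq> {..<n}" using \<open>m = a + b\<close> keys_add[of a b] by auto
qed

lemma in_vars_Var: "i < n \<Longrightarrow> in_vars n (Var i :: 'a::comm_ring_1 mpoly)"
  by (simp add: in_vars_def Var_def)

lemma Var_mult: "Var i * Poly_Mapping.single m (1::'a::comm_ring_1) = Poly_Mapping.single (Poly_Mapping.single i 1 + m) 1"
  by (simp add: Var_def mult_single)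

lemma Var_single: "(Var i :: 'a::comm_ring_1 mpoly) = Poly_Mapping.single (Poly_Mapping.single i 1) 1"
  by (simp add: Var_def)

lemma less7: "(k::nat) < 7 \<Longrightarrow> k = 0 \<or> k = 1 \<or> k = 2 \<or> k = 3 \<or> k = 4 \<or> k = 5 \<or> k = 6"
  by arith

lemma seven: "{..<7::nat} = {0,1,2,3,4,5,6}" by auto

definition theta :: "(nat \<Rightarrow>\<^sub>0 nat) \<Rightarrow> 'a::comm_ring_1" where
  "theta m = (if Poly_Mapping.lookup m 0 = 2 \<and> Poly_Mapping.lookup m 1 = 0 \<and> Poly_Mapping.lookup m 2 = 0 \<and>
                 Poly_Mapping.lookup m 3 = 2 \<and> Poly_Mapping.lookup m 4 = 1 \<and> Poly_Mapping.lookup m 5 = 0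
              then 1 else 0)"

definition gen_ok :: "(nat \<Rightarrow>\<^sub>0 nat) \<Rightarrow> bool" where
  "gen_ok s \<longleftrightarrow> (\<exists>i<6. 3 \<le> Poly_Mapping.lookup s i) \<or>
     (1 \<le> Poly_Mapping.lookup s 0 \<and> 1 \<le> Poly_Mapping.lookup s 1 \<and> 1 \<le> Poly_Mapping.lookup s 2)"

lemma less6: "(i::nat) < 6 \<Longrightarrow> i = 0 \<or> i = 1 \<or> i = 2 \<or> i = 3 \<or> i = 4 \<or> i = 5"
  by arith

lemma psi_kill: assumes "gen_ok s" shows "psi (t + s) = (0::'a::comm_ring_1)"
proof -
  have A: "alpha a b c = (0::'a)" if "3 \<le> a \<or> 3 \<le> b \<or> 3 \<le> c" for a b c
    using alpha_big that by blast
  show ?thesis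
  proof (cases "\<exists>i<6. 3 \<le> Poly_Mapping.lookup s i")
    case True
    then obtain i where i: "i < 6" "3 \<le> Poly_Mapping.lookup s i" by blast
    from less6[OF i(1)] show ?thesis
      using i(2) by (elim disjE) (simp_all add: psi_def lookup_add A)
  next
    case False
    then have "1 \<le> Poly_Mapping.lookup s 0" "1 \<le> Poly_Mapping.lookup s 1" "1 \<le> Poly_Mapping.lookup s 2"
      using assms unfolding gen_ok_def by auto
    then show ?thesis by (simp add: psi_def lookup_add alpha_pos)
  qed
qed

lemma theta_kill: assumes "gen_ok s" shows "theta (t + s) = (0::'a::comm_ring_1)"
proof (cases "\<exists>i<6. 3 \<le> Poly_Mapping.lookup s i")
  case True
  then obtain i where i: "i < 6" "3 \<le> Poly_Mapping.lookup s i" by blast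
  from less6[OF i(1)] show ?thesis
    using i(2) by (elim disjE) (auto simp add: theta_def lookup_add)
next
  case False
  then have "1 \<le> Poly_Mapping.lookup s 1"
    using assms unfolding gen_ok_def by auto
  then show ?thesis by (simp add: theta_def lookup_add)
qed

lemma Var_cube: "(Var i :: 'a::comm_ring_1 mpoly) ^ 3 =
   Poly_Mapping.single (Poly_Mapping.single i 1 + Poly_Mapping.single i 1 + Poly_Mapping.single i 1) 1"
  by (simp add: Var_single power3_eq_cube mult_single)

lemma cube_ok: "i < 6 \<Longrightarrow> gen_ok (Poly_Mapping.single i 1 + Poly_Mapping.single i 1 + Poly_Mapping.single i 1)"
  unfolding gen_ok_def by (rule disjI1, rule exI[of _ i]) (simp add: lookup_add)

lemma gens_ok:
  fixes gs :: "'a::comm_ring_1 mpoly list"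
  assumes "gs = [Var 0 ^ 3, Var 1 ^ 3, Var 2 ^ 3, Var 3 ^ 3, Var 4 ^ 3, Var 5 ^ 3, Var 0 * Var 1 * Var 2]"
  shows "\<forall>k<length gs. \<exists>s. gs ! k = Poly_Mapping.single s 1 \<and> gen_ok s"
proof (intro allI impI)
  fix k assume "k < length gs"
  then have "k < 7" using assms by simp
  then consider "k < 6" | "k = 6" by linarith
  then show "\<exists>s. gs ! k = Poly_Mapping.single s 1 \<and> gen_ok s"
  proof cases
    case 1
    then have "gs ! k = Var k ^ 3" using assms less6[OF 1] by auto
    then show ?thesis using cube_ok[OF 1]
      by (intro exI[of _ "Poly_Mapping.single k 1 + Poly_Mapping.single k 1 + Poly_Mapping.single k 1"])
         (simp add: Var_cube)
  next
    case 2
    then show ?thesis using assms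
      by (intro exI[of _ "Poly_Mapping.single 0 1 + Poly_Mapping.single 1 1 + Poly_Mapping.single 2 1"])
         (simp add: Var_single mult_single gen_ok_def lookup_add)
  qed
qed

lemma ident:
  fixes x0 x1 x2 x3 x4 x5 :: "'a::comm_ring_1"
  shows "(x0+x1+x2+x3+x4+x5) * ((x0*x0+x1*x1+x2*x2 - x0*x1 - x0*x2 - x1*x2) * ((x3-x4)*(x4-x5)*(x3-x5)))
   = ((x3-x4)*(x4-x5)*(x3-x5)) * x0^3 + ((x3-x4)*(x4-x5)*(x3-x5)) * x1^3 + ((x3-x4)*(x4-x5)*(x3-x5)) * x2^3
     + ((x0*x0+x1*x1+x2*x2 - x0*x1 - x0*x2 - x1*x2) * (x4-x5)) * x3^3
     + ((x0*x0+x1*x1+x2*x2 - x0*x1 - x0*x2 - x1*x2) * (x5-x3)) * x4^3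
     + ((x0*x0+x1*x1+x2*x2 - x0*x1 - x0*x2 - x1*x2) * (x3-x4)) * x5^3
     + (- (((x3-x4)*(x4-x5)*(x3-x5)) + ((x3-x4)*(x4-x5)*(x3-x5)) + ((x3-x4)*(x4-x5)*(x3-x5)))) * (x0*x1*x2)"
  by (simp add: algebra_simps power3_eq_cube)

theorem lemma5p5:
  shows "fails_WLP_in_degree 6
           [Var 0 ^ 3, Var 1 ^ 3, Var 2 ^ 3, Var 3 ^ 3, Var 4 ^ 3, Var 5 ^ 3,
            Var 0 * Var 1 * Var 2 :: ('k::field_char_0) mpoly] 5"
proof -
  define gs :: "'k mpoly list" where
    "gs = [Var 0 ^ 3, Var 1 ^ 3, Var 2 ^ 3, Var 3 ^ 3, Var 4 ^ 3, Var 5 ^ 3, Var 0 * Var 1 * Var 2]"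
  have G: "\<forall>k<length gs. \<exists>s. gs ! k = Poly_Mapping.single s 1 \<and> gen_ok s"
    using gens_ok gs_def by blast
  have Gpsi: "\<forall>k<length gs. \<exists>s. gs ! k = Poly_Mapping.single s 1 \<and> (\<forall>t. psi (t + s) = (0::'k))"
    using G psi_kill by blast
  have Gtheta: "\<forall>k<length gs. \<exists>s. gs ! k = Poly_Mapping.single s 1 \<and> (\<forall>t. theta (t + s) = (0::'k))"
    using G theta_kill by blast
  have ivV: "in_vars 6 (Var i :: 'k mpoly)" if "i < 6" for i
    using in_vars_Var that by blast
  have nsurj: "\<not> mult_surjective 6 gs 5"
  proof
    assume S: "mult_surjective 6 gs 5"
    define g :: "'k mpoly" where "g = Var 0 * Var 0 * Var 1 * Var 3 * Var 3 * Var 4"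
    have iv: "in_vars 6 g" unfolding g_def by (intro in_vars_mult ivV) simp_all
    have "homog (1+1+1+1+1+1) g" unfolding g_def by (intro homog_mult homog_Var)
    moreover have e: "(1+1+1+1+1+1::nat) = Suc 5" by simp
    ultimately have hg: "homog (Suc 5) g" by (simp only: e)
    obtain f where "in_ideal 6 gs (g - lin_form 6 * f)"
      using S iv hg unfolding mult_surjective_def by blast
    then have "Phi psi (g - lin_form 6 * f) = (0::'k)" by (rule Phi_ideal[OF Gpsi])
    moreover have "Phi psi (lin_form 6 * f) = (0::'k)"
      by (rule Phi_lin) (intro allI psi_lin)
    moreover have "Phi psi g = (1::'k)"
      unfolding g_def by (simp add: Var_single mult_single Phi_single psi_def lookup_add lookup_single alpha_def)
    ultimately show False by (simp add: Phi_diff)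
  qed
  have ninj: "\<not> mult_injective 6 gs 5"
  proof
    assume I: "mult_injective 6 gs 5"
    define P :: "'k mpoly" where
      "P = Var 0 * Var 0 + Var 1 * Var 1 + Var 2 * Var 2 - Var 0 * Var 1 - Var 0 * Var 2 - Var 1 * Var 2"
    define V :: "'k mpoly" where "V = (Var 3 - Var 4) * (Var 4 - Var 5) * (Var 3 - Var 5)"
    define f where "f = P * V"
    have ivP: "in_vars 6 P" unfolding P_def
      by (intro in_vars_add in_vars_diff in_vars_mult ivV) simp_all
    have ivVV: "in_vars 6 V" unfolding V_def
      by (intro in_vars_add in_vars_diff in_vars_mult ivV) simp_all
    have ivf: "in_vars 6 f" unfolding f_def using ivP ivVV by (rule in_vars_mult)
    have hVV: "homog 2 (Var i * Var j :: 'k mpoly)" for i j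
      using homog_mult[OF homog_Var homog_Var, of i j] by (simp only: one_add_one)
    have hP: "homog 2 P" unfolding P_def
      by (intro homog_add homog_diff hVV)
    have "homog (1+1+1) V" unfolding V_def
      by (intro homog_mult homog_diff homog_Var)
    then have "homog (2 + (1+1+1)) f" unfolding f_def by (rule homog_mult[OF hP])
    moreover have e5: "2 + (1+1+1) = (5::nat)" by simp
    ultimately have hf: "homog 5 f" by (simp only: e5)
    define W where "W = - (V + V + V)"
    have ivW: "in_vars 6 W" unfolding W_def using ivVV by (intro in_vars_uminus in_vars_add)
    define c where "c = (\<lambda>k. [V, V, V, P * (Var 4 - Var 5), P * (Var 5 - Var 3), P * (Var 3 - Var 4),
        W] ! k)"
    have "in_ideal 6 gs (lin_form 6 * f)"
      unfolding in_ideal_def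
    proof (rule exI[of _ c], intro conjI allI impI)
      fix k assume "k < length gs"
      then have "k < 7" by (simp add: gs_def)
      from less7[OF this] show "in_vars 6 (c k)"
        by (elim disjE) (simp_all add: c_def ivW ivVV in_vars_add in_vars_uminus in_vars_mult ivP in_vars_diff ivV)
    next
      have L6: "lin_form 6 = (Var 0 + Var 1 + Var 2 + Var 3 + Var 4 + Var 5 :: 'k mpoly)"
        by (simp add: lin_form_def six ac_simps)
      have S7: "(\<Sum>k<length gs. c k * gs ! k) =
        V * Var 0 ^ 3 + V * Var 1 ^ 3 + V * Var 2 ^ 3 + (P * (Var 4 - Var 5)) * Var 3 ^ 3
        + (P * (Var 5 - Var 3)) * Var 4 ^ 3 + (P * (Var 3 - Var 4)) * Var 5 ^ 3
        + W * (Var 0 * Var 1 * Var 2)"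
        by (simp add: gs_def seven c_def ac_simps)
      show "lin_form 6 * f = (\<Sum>k<length gs. c k * gs ! k)"
        unfolding L6 S7 f_def P_def V_def W_def by (rule ident)
    qed
    then have "in_ideal 6 gs f" using I ivf hf unfolding mult_injective_def by blast
    then have "Phi theta f = (0::'k)" by (rule Phi_ideal[OF Gtheta])
    moreover have "Phi theta f = (1::'k)"
      unfolding f_def P_def V_def
      by (simp add: Var_single ring_distribs mult_single Phi_add Phi_diff Phi_single theta_def lookup_add lookup_single)
    ultimately show False by simp
  qed
  show ?thesis using ninj nsurj unfolding fails_WLP_in_degree_def gs_def by blast
qed

end
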